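(* Let $x,y\ge 1$. The maximum number of edges of a connected minimal $(x,y)$ task-dependency graph of order $n$ is $\max(x,y)$ if $n=x+y$ (in which case $\min(x,y)=1$), and $2n-x-y-2$ if $n>x+y$.
   Context: A task-dependency graph is a finite directed acyclic graph (no loops, no multiple edges). A vertex is initial if it has in-degree $0$ and terminal if it has out-degree $0$; an isolated vertex counts as both. An $(x,y)$ task-dependency graph has exactly $x$ initial and exactly $y$ terminal vertices. A minimal $(x,y)$ task-dependency graph is an $(x,y)$ task-dependency graph from which removing any single edge produces a graph that is not an $(x,y)$ task-dependency graph. A connected minimal $(x,y)$ task-dependency graph is a minimal $(x,y)$ task-dependency graph whose underlying undirected graph is connected. The order is the number of vertices. *)

theory Defs
  imports Main
begin

text \<open>A digraph is given by a vertex set V and an edge relation E \<subseteq> V \<times> V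
  (a set of ordered pairs, so no multiple edges); acyclic E excludes loops and cycles.\<close>

definition tdg :: "'a set \<Rightarrow> ('a \<times> 'a) set \<Rightarrow> bool" where
  "tdg V E \<longleftrightarrow> finite V \<and> E \<subseteq> V \<times> V \<and> acyclic E"

definition initials :: "'a set \<Rightarrow> ('a \<times> 'a) set \<Rightarrow> 'a set" where
  "initials V E = {v \<in> V. \<forall>u. (u, v) \<notin> E}"

definition terminals :: "'a set \<Rightarrow> ('a \<times> 'a) set \<Rightarrow> 'a set" where
  "terminals V E = {v \<in> V. \<forall>w. (v, w) \<notin> E}"

definition xy_tdg :: "nat \<Rightarrow> nat \<Rightarrow> 'a set \<Rightarrow> ('a \<times> 'a) set \<Rightarrow> bool" where
  "xy_tdg x y V E \<longleftrightarrow> tdg V E \<and> card (initials V E) = x \<and> card (terminals V E) = y"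

definition minimal_xy_tdg :: "nat \<Rightarrow> nat \<Rightarrow> 'a set \<Rightarrow> ('a \<times> 'a) set \<Rightarrow> bool" where
  "minimal_xy_tdg x y V E \<longleftrightarrow> xy_tdg x y V E \<and> (\<forall>e\<in>E. \<not> xy_tdg x y V (E - {e}))"

definition weakly_connected :: "'a set \<Rightarrow> ('a \<times> 'a) set \<Rightarrow> bool" where
  "weakly_connected V E \<longleftrightarrow> (\<forall>u\<in>V. \<forall>v\<in>V. (u, v) \<in> (E \<union> E\<inverse>)\<^sup>*)"

definition conn_minimal_xy_tdg :: "nat \<Rightarrow> nat \<Rightarrow> 'a set \<Rightarrow> ('a \<times> 'a) set \<Rightarrow> bool" where
  "conn_minimal_xy_tdg x y V E \<longleftrightarrow> minimal_xy_tdg x y V E \<and> weakly_connected V E"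

text \<open>Edge counts of connected minimal (x,y) task-dependency graphs of order n
  (every graph of order n is isomorphic to one on vertex set {0..<n}).\<close>

definition edge_counts :: "nat \<Rightarrow> nat \<Rightarrow> nat \<Rightarrow> nat set" where
  "edge_counts x y n = {card E | E. conn_minimal_xy_tdg x y {0..<n} E}"

end

theory Submission
  imports Defs
begin


definition uo :: "('a \<times> 'a) set \<Rightarrow> 'a \<Rightarrow> 'a \<Rightarrow> bool" where
  "uo E u v \<longleftrightarrow> (\<forall>w. (u,w)\<in>E \<longrightarrow> w=v)"
definition ui :: "('a \<times> 'a) set \<Rightarrow> 'a \<Rightarrow> 'a \<Rightarrow> bool" where
  "ui E u v \<longleftrightarrow> (\<forall>w. (w,v)\<in>E \<longrightarrow> w=u)"

lemma min_edge:
  assumes "minimal_xy_tdg x y V E" "(u,v)\<in>E"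
  shows "uo E u v \<or> ui E u v"
proof (rule ccontr)
  assume "\<not> ?thesis"
  then obtain w1 w2 where w1: "(u,w1)\<in>E" "w1\<noteq>v" and w2: "(w2,v)\<in>E" "w2\<noteq>u"
    by (auto simp: uo_def ui_def)
  let ?E = "E - {(u,v)}"
  have t: "tdg V E" using assms(1) by (simp add: minimal_xy_tdg_def xy_tdg_def)
  have "tdg V ?E" using t by (auto simp: tdg_def intro: acyclic_subset)
  moreover have "initials V ?E = initials V E" using w2 by (auto simp: initials_def)
  moreover have "terminals V ?E = terminals V E" using w1 by (auto simp: terminals_def)
  ultimately have "xy_tdg x y V ?E" using assms(1) by (simp add: minimal_xy_tdg_def xy_tdg_def)
  thus False using assms by (auto simp: minimal_xy_tdg_def)
qed

lemma min_intro:
  assumes "tdg V E" "card (initials V E) = x" "card (terminals V E) = y"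
   "\<forall>(u,v)\<in>E. uo E u v \<or> ui E u v"
  shows "minimal_xy_tdg x y V E"
proof -
  have fin: "finite V" using assms(1) by (simp add: tdg_def)
  have "\<not> xy_tdg x y V (E - {e})" if "e\<in>E" for e
  proof -
    obtain u v where e: "e=(u,v)" by force
    have uV: "u\<in>V" "v\<in>V" using assms(1) that e by (auto simp: tdg_def)
    from assms(4) that e have "uo E u v \<or> ui E u v" by auto
    thus ?thesis
    proof
      assume h: "uo E u v"
      have s1: "terminals V E \<subseteq> terminals V (E - {e})"
        unfolding terminals_def by blast
      have s2: "u \<in> terminals V (E - {e})"
        using h uV e unfolding terminals_def uo_def by blast
      have s3: "u \<notin> terminals V E" using that e unfolding terminals_def by blast
      have fs: "finite (terminals V (E - {e}))"
        using fin unfolding terminals_def by simp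
      have "card (terminals V E) < card (terminals V (E-{e}))"
        using s1 s2 s3 fs by (intro psubset_card_mono) auto
      thus ?thesis using assms(3) by (simp add: xy_tdg_def)
    next
      assume h: "ui E u v"
      have s1: "initials V E \<subseteq> initials V (E - {e})"
        unfolding initials_def by blast
      have s2: "v \<in> initials V (E - {e})"
        using h uV e unfolding initials_def ui_def by blast
      have s3: "v \<notin> initials V E" using that e unfolding initials_def by blast
      have fs: "finite (initials V (E - {e}))"
        using fin unfolding initials_def by simp
      have "card (initials V E) < card (initials V (E-{e}))"
        using s1 s2 s3 fs by (intro psubset_card_mono) auto
      thus ?thesis using assms(2) by (simp add: xy_tdg_def)
    qed
  qed
  thus ?thesis using assms by (simp add: minimal_xy_tdg_def xy_tdg_def)
qed

definition slot :: "('a \<times> 'a) set \<Rightarrow> 'a \<times> 'a \<Rightarrow> 'a \<times> bool" where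
  "slot E e = (if uo E (fst e) (snd e) then (fst e, True) else (snd e, False))"

lemma slot_pair: "slot E (u,v) = (if uo E u v then (u,True) else (v,False))"
  by (simp add: slot_def)

lemma slot_inj:
  assumes "minimal_xy_tdg x y V E"
  shows "inj_on (slot E) E"
proof -
  have key: "(a,b) = (c,d)" if ab: "(a,b) \<in> E" and cd: "(c,d) \<in> E"
    and eq: "slot E (a,b) = slot E (c,d)" for a b c d
  proof (cases "uo E a b")
    case T1: True
    show ?thesis
    proof (cases "uo E c d")
      case True
      then have "a = c" using eq T1 by (simp add: slot_pair)
      then have "d = b" using T1 cd unfolding uo_def by blast
      then show ?thesis using \<open>a = c\<close> by simp
    next
      case False
      then show ?thesis using eq T1 by (simp add: slot_pair)
    qed
  next
    case F1: False
    show ?thesis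
    proof (cases "uo E c d")
      case True
      then show ?thesis using eq F1 by (simp add: slot_pair)
    next
      case False
      then have bd: "b = d" using eq F1 by (simp add: slot_pair)
      have m1: "uo E a b \<or> ui E a b" using min_edge[OF assms ab] .
      have m2: "uo E c d \<or> ui E c d" using min_edge[OF assms cd] .
      have "ui E a b" using m1 F1 by blast
      moreover have "ui E c d" using m2 False by blast
      ultimately have "a = c" using ab cd bd unfolding ui_def by blast
      then show ?thesis using bd by simp
    qed
  qed
  show ?thesis
    by (rule inj_onI) (use key in force)
qed

lemma slot_miss:
  assumes m: "minimal_xy_tdg x y V E" and ab: "(a,b) \<in> E"
  shows "(a,True) \<notin> slot E ` E \<or> (b,False) \<notin> slot E ` E"
proof (rule ccontr)
  assume "\<not> ?thesis"
  then have h1: "(a,True) \<in> slot E ` E" and h2: "(b,False) \<in> slot E ` E" by blast+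
  from h1 obtain u v where uv: "(u,v) \<in> E" "slot E (u,v) = (a,True)" by auto
  from h2 obtain u' v' where uv': "(u',v') \<in> E" "slot E (u',v') = (b,False)" by auto
  have "uo E u v" using uv(2) by (simp add: slot_pair split: if_splits)
  then have "u = a" using uv(2) by (simp add: slot_pair)
  have nu: "\<not> uo E u' v'" using uv'(2) by (simp add: slot_pair split: if_splits)
  then have "v' = b" using uv'(2) by (simp add: slot_pair)
  have "uo E u' v' \<or> ui E u' v'" using min_edge[OF m uv'(1)] .
  then have "ui E u' v'" using nu by blast
  then have "u' = a" using ab \<open>v' = b\<close> unfolding ui_def by blast
  have "v = b" using \<open>uo E u v\<close> \<open>u = a\<close> ab unfolding uo_def by blast
  have "uo E u' v'" using \<open>uo E u v\<close> \<open>u = a\<close> \<open>u' = a\<close> \<open>v = b\<close> \<open>v' = b\<close> by simp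
  then show False using nu by simp
qed

lemma slots:
  assumes m: "minimal_xy_tdg x y V E"
    and M: "M \<subseteq> (V - terminals V E) \<times> {True} \<union> (V - initials V E) \<times> {False}"
    and miss: "M \<inter> slot E ` E = {}"
  shows "card E + card M \<le> (card V - y) + (card V - x)"
proof -
  have t: "tdg V E" and cx: "card (initials V E) = x" and cy: "card (terminals V E) = y"
    using m by (auto simp: minimal_xy_tdg_def xy_tdg_def)
  have fin: "finite V" and EV: "E \<subseteq> V \<times> V" using t by (auto simp: tdg_def)
  let ?S = "(V - terminals V E) \<times> {True} \<union> (V - initials V E) \<times> {False}"
  have finS: "finite ?S" using fin by auto
  have sub: "slot E ` E \<subseteq> ?S"
  proof
    fix s assume "s \<in> slot E ` E"
    then obtain u v where uv: "(u,v) \<in> E" "s = slot E (u,v)" by auto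
    then show "s \<in> ?S" using EV by (auto simp: slot_def terminals_def initials_def)
  qed
  have "card E = card (slot E ` E)" using slot_inj[OF m] by (simp add: card_image)
  also have "card (slot E ` E) + card M = card (slot E ` E \<union> M)"
    using miss finite_subset[OF sub finS] finite_subset[OF M finS]
    by (subst card_Un_disjoint) auto
  also have "\<dots> \<le> card ?S" using sub M finS by (intro card_mono) auto
  also have "card ?S = card (V - terminals V E) + card (V - initials V E)"
    using fin by (subst card_Un_disjoint) (auto simp: card_cartesian_product)
  also have "\<dots> = (card V - y) + (card V - x)" using fin cx cy
    by (simp add: card_Diff_subset terminals_def initials_def)
  finally show ?thesis by simp
qed



lemma wc_closed:
  assumes wc: "weakly_connected V E" and aV: "a \<in> V" and aC: "a \<in> C"
    and cl: "\<And>z z'. z \<in> C \<Longrightarrow> (z,z') \<in> E \<union> E\<inverse> \<Longrightarrow> z' \<in> C"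
  shows "V \<subseteq> C"
proof
  fix v assume "v \<in> V"
  then have "(a,v) \<in> (E \<union> E\<inverse>)\<^sup>*" using wc aV by (auto simp: weakly_connected_def)
  then show "v \<in> C"
    by (induction rule: rtrancl_induct) (use aC cl in auto)
qed

lemma upper1:
  assumes m: "minimal_xy_tdg x y V E" and ab: "(a,b) \<in> E"
  shows "card E + 1 \<le> (card V - y) + (card V - x)"
proof -
  have EV: "E \<subseteq> V \<times> V" using m by (auto simp: minimal_xy_tdg_def xy_tdg_def tdg_def)
  obtain s where s: "s \<in> {(a,True),(b,False)}" "s \<notin> slot E ` E"
    using slot_miss[OF m ab] by blast
  have "card E + card {s} \<le> (card V - y) + (card V - x)"
    apply (rule slots[OF m])
    using s ab EV by (auto simp: terminals_def initials_def)
  then show ?thesis by simp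
qed

lemma upper2:
  assumes m: "minimal_xy_tdg x y V E" and ab: "(a,b) \<in> E" and bc: "(b,c) \<in> E"
  shows "card E + 2 \<le> (card V - y) + (card V - x)"
proof -
  have EV: "E \<subseteq> V \<times> V" and ac: "acyclic E"
    using m by (auto simp: minimal_xy_tdg_def xy_tdg_def tdg_def)
  have ne: "a \<noteq> b" "b \<noteq> c" using ab bc ac by (auto simp: acyclic_def)
  obtain s where s: "s \<in> {(a,True),(b,False)}" "s \<notin> slot E ` E"
    using slot_miss[OF m ab] by blast
  obtain t where t: "t \<in> {(b,True),(c,False)}" "t \<notin> slot E ` E"
    using slot_miss[OF m bc] by blast
  have st: "s \<noteq> t" using s t ne by auto
  have "card E + card {s,t} \<le> (card V - y) + (card V - x)"
    apply (rule slots[OF m])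
    using s t ab bc EV by (auto simp: terminals_def initials_def)
  then show ?thesis using st by simp
qed

lemma gt_case:
  assumes m: "minimal_xy_tdg x y V E" and cV: "card V > x + y"
  shows "card E \<le> 2 * card V - x - y - 2"
proof -
  have t: "tdg V E" and cx: "card (initials V E) = x" and cy: "card (terminals V E) = y"
    using m by (auto simp: minimal_xy_tdg_def xy_tdg_def)
  have fin: "finite V" and EV: "E \<subseteq> V \<times> V" using t by (auto simp: tdg_def)
  have "card (initials V E \<union> terminals V E) \<le> x + y"
    using card_Un_le[of "initials V E" "terminals V E"] cx cy by simp
  then have "initials V E \<union> terminals V E \<noteq> V" using cV by auto
  then obtain b where b: "b \<in> V" "b \<notin> initials V E" "b \<notin> terminals V E"
    by (auto simp: initials_def terminals_def)
  then obtain a c where "(a,b) \<in> E" "(b,c) \<in> E" by (auto simp: initials_def terminals_def)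
  from upper2[OF m this] show ?thesis using cV by simp
qed



lemma eq_case:
  assumes c: "conn_minimal_xy_tdg x y V E" and cV: "card V = x + y" and x: "x \<ge> 1" and y: "y \<ge> 1"
  shows "min x y = 1 \<and> card E \<le> max x y"
proof -
  have m: "minimal_xy_tdg x y V E" and wc: "weakly_connected V E"
    using c by (auto simp: conn_minimal_xy_tdg_def)
  have t: "tdg V E" and cx: "card (initials V E) = x" and cy: "card (terminals V E) = y"
    using m by (auto simp: minimal_xy_tdg_def xy_tdg_def)
  have fin: "finite V" and EV: "E \<subseteq> V \<times> V" using t by (auto simp: tdg_def)
  have noiso: "\<exists>w. (v,w) \<in> E \<or> (w,v) \<in> E" if "v \<in> V" for v
  proof -
    have "card V \<ge> 2" using cV x y by simp
    have "\<not> V \<subseteq> {v}"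
    proof
      assume "V \<subseteq> {v}"
      then have "card V \<le> card {v}" by (intro card_mono) auto
      then show False using \<open>card V \<ge> 2\<close> by simp
    qed
    then obtain w where w: "w \<in> V" "w \<noteq> v" by auto
    then have "(v,w) \<in> (E \<union> E\<inverse>)\<^sup>*" using wc that by (auto simp: weakly_connected_def)
    then obtain z where "(v,z) \<in> E \<union> E\<inverse>" using w(2)
      by (cases rule: converse_rtranclE) auto
    then show ?thesis by auto
  qed
  have disj: "initials V E \<inter> terminals V E = {}"
    using noiso by (auto simp: initials_def terminals_def)
  have "card (initials V E \<union> terminals V E) = x + y"
    using disj cx cy fin by (subst card_Un_disjoint) (auto simp: initials_def terminals_def)
  then have IT: "initials V E \<union> terminals V E = V"
    using cV fin by (intro card_subset_eq) (auto simp: initials_def terminals_def)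
  obtain v0 where "v0 \<in> V" using cV x y by fastforce
  then obtain a b where ab: "(a,b) \<in> E" using noiso by blast
  have aI: "a \<in> initials V E" and bT: "b \<in> terminals V E"
    using IT ab EV by (auto simp: initials_def terminals_def)
  have edgeIT: "u \<in> initials V E \<and> v \<in> terminals V E" if "(u,v) \<in> E" for u v
    using IT that EV by (auto simp: initials_def terminals_def)
  have mn: "min x y = 1"
  proof (cases "uo E a b")
    case False
    have uiall: "ui E a w" if "(a,w) \<in> E" for w
    proof -
      have "uo E a w \<or> ui E a w" using min_edge[OF m that] .
      moreover have "\<not> uo E a w" using False ab by (auto simp: uo_def)
      ultimately show ?thesis by blast
    qed
    let ?C = "{a} \<union> {w. (a,w) \<in> E}"
    have "V \<subseteq> ?C"
    proof (rule wc_closed[OF wc])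
      show "a \<in> V" using ab EV by auto
      show "a \<in> ?C" by simp
      fix z z' assume z: "z \<in> ?C" "(z,z') \<in> E \<union> E\<inverse>"
      show "z' \<in> ?C"
      proof (cases "z = a")
        case True
        then show ?thesis using z aI by (auto simp: initials_def)
      next
        case False
        then have za: "(a,z) \<in> E" using z by auto
        then have "z \<in> terminals V E" using edgeIT by blast
        then have "(z',z) \<in> E" using z by (auto simp: terminals_def)
        then show ?thesis using uiall[OF za] by (auto simp: ui_def)
      qed
    qed
    then have "initials V E \<subseteq> {a}"
      by (auto simp: initials_def)
    then have "card (initials V E) \<le> card {a}" by (intro card_mono) auto
    then have "x \<le> 1" using cx by simp
    then show ?thesis using x y by simp
  next
    case True
    have uoall: "uo E w b" if "(w,b) \<in> E" for w
    proof (cases "ui E a b")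
      case True
      then show ?thesis using that \<open>uo E a b\<close> by (auto simp: ui_def)
    next
      case False
      have "uo E w b \<or> ui E w b" using min_edge[OF m that] .
      moreover have "\<not> ui E w b" using False ab by (auto simp: ui_def)
      ultimately show ?thesis by blast
    qed
    let ?C = "{b} \<union> {w. (w,b) \<in> E}"
    have "V \<subseteq> ?C"
    proof (rule wc_closed[OF wc])
      show "b \<in> V" using ab EV by auto
      show "b \<in> ?C" by simp
      fix z z' assume z: "z \<in> ?C" "(z,z') \<in> E \<union> E\<inverse>"
      show "z' \<in> ?C"
      proof (cases "z = b")
        case True
        then show ?thesis using z bT by (auto simp: terminals_def)
      next
        case False
        then have za: "(z,b) \<in> E" using z by auto
        then have "z \<in> initials V E" using edgeIT by blast
        then have "(z,z') \<in> E" using z by (auto simp: initials_def)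
        then show ?thesis using uoall[OF za] by (auto simp: uo_def)
      qed
    qed
    then have "terminals V E \<subseteq> {b}"
      by (auto simp: terminals_def)
    then have "card (terminals V E) \<le> card {b}" by (intro card_mono) auto
    then have "y \<le> 1" using cy by simp
    then show ?thesis using x y by simp
  qed
  have "card E + 1 \<le> (card V - y) + (card V - x)" using upper1[OF m ab] .
  then have "card E + 1 \<le> x + y" using cV by simp
  then have "card E \<le> max x y" using mn by (cases "x \<le> y") (simp_all add: min_def max_def)
  then show ?thesis using mn by simp
qed



definition Eg :: "nat \<Rightarrow> nat \<Rightarrow> nat \<Rightarrow> (nat \<times> nat) set" where
  "Eg x y n = (\<lambda>v. (0,v)) ` {x<..<n} \<union> (\<lambda>u. (u,x)) ` ({0<..<x} \<union> {x+y..<n})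
     \<union> (if n = x+y then {(0,x)} else {})"

lemma Eg_mem: "(a,b) \<in> Eg x y n \<longleftrightarrow>
   (a = 0 \<and> x < b \<and> b < n) \<or> (b = x \<and> ((0 < a \<and> a < x) \<or> (x+y \<le> a \<and> a < n)))
   \<or> (n = x+y \<and> a = 0 \<and> b = x)"
  unfolding Eg_def by auto

locale cons =
  fixes x y n :: nat
  assumes x: "x \<ge> 1" and y: "y \<ge> 1" and n: "x + y \<le> n"
    and eqc: "n = x + y \<Longrightarrow> min x y = 1"
begin

abbreviation "E \<equiv> Eg x y n"

lemma EV: "E \<subseteq> {0..<n} \<times> {0..<n}"
proof
  fix p assume "p \<in> E"
  then obtain a b where p: "p = (a,b)" and "(a,b) \<in> E" by (cases p) auto
  then have "(a = 0 \<and> x < b \<and> b < n) \<or> (b = x \<and> ((0 < a \<and> a < x) \<or> (x+y \<le> a \<and> a < n)))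
   \<or> (n = x+y \<and> a = 0 \<and> b = x)" by (simp add: Eg_mem)
  then show "p \<in> {0..<n} \<times> {0..<n}" using p x y n by auto
qed

definition rk :: "nat \<Rightarrow> nat" where "rk v = (if v = 0 then 0 else if v = x then 2 else 1)"

lemma rk_edge: "(a,b) \<in> E \<Longrightarrow> rk a < rk b"
  using x y by (auto simp: Eg_mem rk_def)

lemma acyc: "acyclic E"
proof -
  have "rk a < rk b" if "(a,b) \<in> E\<^sup>+" for a b
    using that by (induction rule: trancl_induct) (auto dest: rk_edge)
  then show ?thesis unfolding acyclic_def by blast
qed

lemma tdgE: "tdg {0..<n} E"
  using EV acyc by (simp add: tdg_def)

lemma inits: "initials {0..<n} E = {0..<x}"
proof -
  have "(\<exists>a. (a,v) \<in> E) \<longleftrightarrow> x \<le> v" if "v < n" for v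
  proof
    assume "\<exists>a. (a,v) \<in> E"
    then show "x \<le> v" using x by (auto simp: Eg_mem)
  next
    assume "x \<le> v"
    show "\<exists>a. (a,v) \<in> E"
    proof (cases "v = x")
      case True
      show ?thesis
      proof (cases "n = x + y")
        case True
        then have "(0,v) \<in> E" using \<open>v = x\<close> by (simp add: Eg_mem)
        then show ?thesis by blast
      next
        case False
        then have "(x+y,v) \<in> E" using \<open>v = x\<close> n by (simp add: Eg_mem)
        then show ?thesis by blast
      qed
    next
      case False
      then have "(0,v) \<in> E" using \<open>x \<le> v\<close> that by (simp add: Eg_mem)
      then show ?thesis by blast
    qed
  qed
  note h = this
  show ?thesis
  proof (rule set_eqI)
    fix v
    have "v \<in> initials {0..<n} E \<longleftrightarrow> v < n \<and> \<not> (\<exists>a. (a,v) \<in> E)"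
      by (auto simp: initials_def)
    then show "v \<in> initials {0..<n} E \<longleftrightarrow> v \<in> {0..<x}"
      using h[of v] n by (cases "v < n") auto
  qed
qed

lemma terms: "terminals {0..<n} E = {x..<x+y}"
proof -
  have "(\<exists>b. (v,b) \<in> E) \<longleftrightarrow> v < x \<or> x + y \<le> v" if "v < n" for v
  proof
    assume "\<exists>b. (v,b) \<in> E"
    then show "v < x \<or> x + y \<le> v" using x by (auto simp: Eg_mem)
  next
    assume h: "v < x \<or> x + y \<le> v"
    show "\<exists>b. (v,b) \<in> E"
    proof (cases "v = 0")
      case True
      show ?thesis
      proof (cases "n = x + y")
        case True
        then have "(v,x) \<in> E" using \<open>v = 0\<close> by (simp add: Eg_mem)
        then show ?thesis by blast
      next
        case False
        then have "(v,x+y) \<in> E" using \<open>v = 0\<close> n y by (simp add: Eg_mem)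
        then show ?thesis by blast
      qed
    next
      case False
      then have "(v,x) \<in> E" using h that by (auto simp: Eg_mem)
      then show ?thesis by blast
    qed
  qed
  note h = this
  show ?thesis
  proof (rule set_eqI)
    fix v
    have "v \<in> terminals {0..<n} E \<longleftrightarrow> v < n \<and> \<not> (\<exists>b. (v,b) \<in> E)"
      by (auto simp: terminals_def)
    then show "v \<in> terminals {0..<n} E \<longleftrightarrow> v \<in> {x..<x+y}"
      using h[of v] n by (cases "v < n") auto
  qed
qed

lemma card_I: "card (initials {0..<n} E) = x" by (simp add: inits)
lemma card_T: "card (terminals {0..<n} E) = y" by (simp add: terms)

lemma edges_ok1:
  assumes ab: "(a,b) \<in> E" shows "uo E a b \<or> ui E a b"
proof -
  from ab have cases: "(a = 0 \<and> x < b \<and> b < n) \<or> (b = x \<and> ((0 < a \<and> a < x) \<or> (x+y \<le> a \<and> a < n)))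
   \<or> (n = x+y \<and> a = 0 \<and> b = x)" by (simp add: Eg_mem)
  show "uo E a b \<or> ui E a b"
  proof -
    { assume h: "a = 0 \<and> x < b \<and> b < n"
      have "ui E a b" unfolding ui_def using h by (auto simp: Eg_mem) }
    moreover
    { assume h: "b = x \<and> ((0 < a \<and> a < x) \<or> (x+y \<le> a \<and> a < n))"
      have "uo E a b" unfolding uo_def using h x by (auto simp: Eg_mem) }
    moreover
    { assume h: "n = x+y \<and> a = 0 \<and> b = x"
      then have "min x y = 1" using eqc by simp
      then have "x = 1 \<or> y = 1" by (auto simp: min_def split: if_splits)
      then have "uo E a b \<or> ui E a b"
      proof
        assume "x = 1"
        then have "ui E a b" unfolding ui_def using h by (auto simp: Eg_mem)
        then show ?thesis ..
      next
        assume "y = 1"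
        then have "uo E a b" unfolding uo_def using h by (auto simp: Eg_mem)
        then show ?thesis ..
      qed }
    ultimately show ?thesis using cases by blast
  qed
qed

lemma edges_ok: "\<forall>(u,v)\<in>E. uo E u v \<or> ui E u v"
  using edges_ok1 by blast

lemma minE: "minimal_xy_tdg x y {0..<n} E"
  by (rule min_intro[OF tdgE card_I card_T edges_ok])

lemma reach0: "v < n \<Longrightarrow> (0,v) \<in> (E \<union> E\<inverse>)\<^sup>*"
proof -
  let ?R = "E \<union> E\<inverse>"
  have x0: "(0,x) \<in> ?R\<^sup>*"
  proof (cases "n = x + y")
    case True
    then have "(0,x) \<in> ?R" by (simp add: Eg_mem)
    then show ?thesis by blast
  next
    case False
    then have "(0,x+y) \<in> ?R" "(x+y,x) \<in> ?R" using n y by (simp_all add: Eg_mem)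
    then show ?thesis by (meson rtrancl.rtrancl_into_rtrancl rtrancl.rtrancl_refl)
  qed
  assume v: "v < n"
  consider "v = 0" | "v = x" | "x < v" | "0 < v \<and> v < x" by linarith
  then show ?thesis
  proof cases
    case 1 then show ?thesis by simp
  next
    case 2 then show ?thesis using x0 by simp
  next
    case 3
    then have "(0,v) \<in> ?R" using v by (simp add: Eg_mem)
    then show ?thesis by blast
  next
    case 4
    then have "(x,v) \<in> ?R" by (simp add: Eg_mem)
    then show ?thesis using x0 by (meson rtrancl.rtrancl_into_rtrancl)
  qed
qed

lemma wcE: "weakly_connected {0..<n} E"
  unfolding weakly_connected_def
proof (intro ballI)
  fix u v assume "u \<in> {0..<n}" "v \<in> {0..<n}"
  then have u: "(0,u) \<in> (E \<union> E\<inverse>)\<^sup>*" and v: "(0,v) \<in> (E \<union> E\<inverse>)\<^sup>*" using reach0 by auto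
  have "(u,0) \<in> ((E \<union> E\<inverse>)\<inverse>)\<^sup>*" using rtrancl_converseI[OF u] .
  moreover have "(E \<union> E\<inverse>)\<inverse> = E \<union> E\<inverse>" by auto
  ultimately have "(u,0) \<in> (E \<union> E\<inverse>)\<^sup>*" by simp
  then show "(u,v) \<in> (E \<union> E\<inverse>)\<^sup>*" using v by (rule rtrancl_trans)
qed

lemma connE: "conn_minimal_xy_tdg x y {0..<n} E"
  using minE wcE by (simp add: conn_minimal_xy_tdg_def)

lemma cardE: "card E = (if n = x + y then x + y - 1 else 2 * n - x - y - 2)"
proof -
  let ?A = "(\<lambda>v. (0::nat,v)) ` {x<..<n}"
  let ?B = "(\<lambda>u. (u,x)) ` ({0<..<x} \<union> {x+y..<n})"
  let ?C = "(if n = x+y then {(0,x)} else {}) :: (nat \<times> nat) set"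
  have cA: "card ?A = n - x - 1" by (subst card_image) (auto intro: inj_onI)
  have cB0: "card ({0<..<x} \<union> {x+y..<n}) = (x - 1) + (n - x - y)"
    by (subst card_Un_disjoint) auto
  have cB: "card ?B = (x - 1) + (n - x - y)" using cB0 by (subst card_image) (auto intro: inj_onI)
  have cC: "card ?C = (if n = x + y then 1 else 0)" by simp
  have d1: "?A \<inter> ?B = {}" by auto
  have d2: "(?A \<union> ?B) \<inter> ?C = {}" by auto
  have "card E = card ?A + card ?B + card ?C"
    unfolding Eg_def using d1 d2
    by (simp add: card_Un_disjoint del: Un_insert_right)
  then show ?thesis using cA cB cC x y n by auto
qed

end



lemma ec_finite: "finite (edge_counts x y n)"
proof -
  have "edge_counts x y n \<subseteq> {..n*n}"
  proof
    fix k assume "k \<in> edge_counts x y n"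
    then obtain E where k: "k = card E" and c: "conn_minimal_xy_tdg x y {0..<n} E"
      by (auto simp: edge_counts_def)
    then have "E \<subseteq> {0..<n} \<times> {0..<n}"
      by (auto simp: conn_minimal_xy_tdg_def minimal_xy_tdg_def xy_tdg_def tdg_def)
    then have "card E \<le> card ({0..<n} \<times> {0..<n})" by (intro card_mono) auto
    then show "k \<in> {..n*n}" using k by (simp add: card_cartesian_product)
  qed
  then show ?thesis by (rule finite_subset) simp
qed

theorem mainTheorem2:
  fixes x y n :: nat
  assumes "x \<ge> 1" and "y \<ge> 1"
  shows "(n = x + y \<longrightarrow>
            (edge_counts x y n \<noteq> {} \<longrightarrow> min x y = 1) \<and>
            (min x y = 1 \<longrightarrow> edge_counts x y n \<noteq> {} \<and> Max (edge_counts x y n) = max x y))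
       \<and> (n > x + y \<longrightarrow>
            edge_counts x y n \<noteq> {} \<and> Max (edge_counts x y n) = 2 * n - x - y - 2)"
proof (intro conjI impI)
  assume hn: "n = x + y"
  {
    assume "edge_counts x y n \<noteq> {}"
    then obtain E where "conn_minimal_xy_tdg x y {0..<n} E" by (auto simp: edge_counts_def)
    from eq_case[OF this _ assms] hn show "min x y = 1" by simp
  }
  assume mn: "min x y = 1"
  have up: "k \<le> max x y" if hk: "k \<in> edge_counts x y n" for k
  proof -
    obtain G where "k = card G" "conn_minimal_xy_tdg x y {0..<n} G"
      using hk by (auto simp: edge_counts_def)
    with eq_case[OF this(2) _ assms] hn show ?thesis by simp
  qed
  interpret cons x y n using assms hn mn by unfold_locales auto
  have mem: "card (Eg x y n) \<in> edge_counts x y n"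
    using connE unfolding edge_counts_def by blast
  then show "edge_counts x y n \<noteq> {}" by blast
  have "card (Eg x y n) = x + y - 1" using cardE hn by simp
  then have cE: "card (Eg x y n) = max x y" using mn by (auto simp: min_def max_def split: if_splits)
  show "Max (edge_counts x y n) = max x y"
    using mem cE up ec_finite by (intro Max_eqI) auto
next
  assume hn: "n > x + y"
  have up: "k \<le> 2 * n - x - y - 2" if hk: "k \<in> edge_counts x y n" for k
  proof -
    obtain G where "k = card G" "conn_minimal_xy_tdg x y {0..<n} G"
      using hk by (auto simp: edge_counts_def)
    then have "k = card G" "minimal_xy_tdg x y {0..<n} G" by (auto simp: conn_minimal_xy_tdg_def)
    with gt_case[OF this(2)] hn show ?thesis by simp
  qed
  interpret cons x y n using assms hn by unfold_locales auto
  have mem: "card (Eg x y n) \<in> edge_counts x y n"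
    using connE unfolding edge_counts_def by blast
  then show "edge_counts x y n \<noteq> {}" by blast
  have cE: "card (Eg x y n) = 2 * n - x - y - 2" using cardE hn by simp
  show "Max (edge_counts x y n) = 2 * n - x - y - 2"
    using mem cE up ec_finite by (intro Max_eqI) auto
qed

end
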